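(* A graph is isomorphic to $KB_m(G)$ for some bipartite graph $G$ if and only if it is an IIC-comparability graph. That is, $KB_m(\text{bipartite})=\text{IIC-comparability}$.
   Context: All graphs are finite and simple. A biclique of a graph $G$ is a set $P\subseteq V(G)$ such that the induced subgraph $G[P]$ is a complete bipartite graph with both parts nonempty, and $P$ is inclusion-maximal with this property. Since $G[P]$ is connected, its bipartition into two nonempty independent sets $X,Y$ (every vertex of $X$ adjacent to every vertex of $Y$) is unique; we write $P=XY$ to mean $P=X\cup Y$ with $X,Y$ these two parts, called the sides of $P$. Two bicliques $P,Q$ of $G$ are mutually included if their sides can be named $P=X_PY_P$, $Q=X_QY_Q$ so that $X_Q\subsetneq X_P$ and $Y_P\subsetneq Y_Q$. The mutually included biclique graph $KB_m(G)$ has the set of bicliques of $G$ as vertex set, two distinct bicliques being adjacent iff they are mutually included. For a poset $\mathcal{P}=(C,\le)$ and $x\in C$, let $I^-_{\mathcal{P}}(x)=\{y\in C: y\le x\}$ and $I^+_{\mathcal{P}}(x)=\{y\in C: x\le y\}$; $\mathcal{P}$ is interval intersection closed (IIC) if for all $u,v\in C$: whenever $I^-_{\mathcal{P}}(u)\cap I^-_{\mathcal{P}}(v)\neq\emptyset$ there is $w\in C$ with $I^-_{\mathcal{P}}(w)=I^-_{\mathcal{P}}(u)\cap I^-_{\mathcal{P}}(v)$, and whenever $I^+_{\mathcal{P}}(u)\cap I^+_{\mathcal{P}}(v)\neq\emptyset$ there is $w\in C$ with $I^+_{\mathcal{P}}(w)=I^+_{\mathcal{P}}(u)\cap I^+_{\mathcal{P}}(v)$.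 The comparability graph of a poset $(C,\le)$ has vertex set $C$, two distinct elements adjacent iff they are comparable. A graph is IIC-comparability if it is the comparability graph of some (finite) IIC poset. *)

theory Defs
  imports Main
begin

type_synonym 'a graph = "'a set \<times> ('a \<times> 'a) set"

definition finite_simple_graph :: "'a graph \<Rightarrow> bool" where
  "finite_simple_graph G \<longleftrightarrow> finite (fst G) \<and> snd G \<subseteq> fst G \<times> fst G
     \<and> (\<forall>x y. (x, y) \<in> snd G \<longrightarrow> (y, x) \<in> snd G) \<and> (\<forall>x. (x, x) \<notin> snd G)"

definition adj :: "'a graph \<Rightarrow> 'a \<Rightarrow> 'a \<Rightarrow> bool" where
  "adj G x y \<longleftrightarrow> (x, y) \<in> snd G"

definition independent :: "'a graph \<Rightarrow> 'a set \<Rightarrow> bool" where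
  "independent G S \<longleftrightarrow> (\<forall>x\<in>S. \<forall>y\<in>S. \<not> adj G x y)"

definition bipartite :: "'a graph \<Rightarrow> bool" where
  "bipartite G \<longleftrightarrow> (\<exists>A B. A \<union> B = fst G \<and> A \<inter> B = {} \<and> independent G A \<and> independent G B)"

definition sides :: "'a graph \<Rightarrow> 'a set \<Rightarrow> 'a set \<Rightarrow> 'a set \<Rightarrow> bool" where
  "sides G P X Y \<longleftrightarrow> X \<noteq> {} \<and> Y \<noteq> {} \<and> X \<inter> Y = {} \<and> X \<union> Y = P
     \<and> independent G X \<and> independent G Y \<and> (\<forall>x\<in>X. \<forall>y\<in>Y. adj G x y)"

definition complete_bipartite_set :: "'a graph \<Rightarrow> 'a set \<Rightarrow> bool" where
  "complete_bipartite_set G P \<longleftrightarrow> P \<subseteq> fst G \<and> (\<exists>X Y. sides G P X Y)"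

definition biclique :: "'a graph \<Rightarrow> 'a set \<Rightarrow> bool" where
  "biclique G P \<longleftrightarrow> complete_bipartite_set G P
     \<and> (\<forall>Q. P \<subset> Q \<longrightarrow> \<not> complete_bipartite_set G Q)"

definition mutually_included :: "'a graph \<Rightarrow> 'a set \<Rightarrow> 'a set \<Rightarrow> bool" where
  "mutually_included G P Q \<longleftrightarrow> (\<exists>XP YP XQ YQ. sides G P XP YP \<and> sides G Q XQ YQ
     \<and> XQ \<subset> XP \<and> YP \<subset> YQ)"

definition KBm :: "'a graph \<Rightarrow> 'a set graph" where
  "KBm G = ({P. biclique G P},
            {(P, Q). biclique G P \<and> biclique G Q \<and> P \<noteq> Q \<and> mutually_included G P Q})"

definition graph_iso :: "'a graph \<Rightarrow> 'b graph \<Rightarrow> bool" where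
  "graph_iso G H \<longleftrightarrow> (\<exists>f. bij_betw f (fst G) (fst H)
     \<and> (\<forall>x\<in>fst G. \<forall>y\<in>fst G. adj G x y \<longleftrightarrow> adj H (f x) (f y)))"

definition partial_order_on_set :: "'a set \<Rightarrow> ('a \<Rightarrow> 'a \<Rightarrow> bool) \<Rightarrow> bool" where
  "partial_order_on_set C le \<longleftrightarrow> (\<forall>x\<in>C. le x x)
     \<and> (\<forall>x\<in>C. \<forall>y\<in>C. le x y \<and> le y x \<longrightarrow> x = y)
     \<and> (\<forall>x\<in>C. \<forall>y\<in>C. \<forall>z\<in>C. le x y \<and> le y z \<longrightarrow> le x z)"

definition Iminus :: "'a set \<Rightarrow> ('a \<Rightarrow> 'a \<Rightarrow> bool) \<Rightarrow> 'a \<Rightarrow> 'a set" where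
  "Iminus C le x = {y\<in>C. le y x}"

definition Iplus :: "'a set \<Rightarrow> ('a \<Rightarrow> 'a \<Rightarrow> bool) \<Rightarrow> 'a \<Rightarrow> 'a set" where
  "Iplus C le x = {y\<in>C. le x y}"

definition IIC :: "'a set \<Rightarrow> ('a \<Rightarrow> 'a \<Rightarrow> bool) \<Rightarrow> bool" where
  "IIC C le \<longleftrightarrow> (\<forall>u\<in>C. \<forall>v\<in>C.
     (Iminus C le u \<inter> Iminus C le v \<noteq> {} \<longrightarrow>
        (\<exists>w\<in>C. Iminus C le w = Iminus C le u \<inter> Iminus C le v))
   \<and> (Iplus C le u \<inter> Iplus C le v \<noteq> {} \<longrightarrow>
        (\<exists>w\<in>C. Iplus C le w = Iplus C le u \<inter> Iplus C le v)))"

definition comparability_graph :: "'a set \<Rightarrow> ('a \<Rightarrow> 'a \<Rightarrow> bool) \<Rightarrow> 'a graph" where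
  "comparability_graph C le =
     (C, {(x, y). x \<in> C \<and> y \<in> C \<and> x \<noteq> y \<and> (le x y \<or> le y x)})"

definition IIC_comparability :: "'a graph \<Rightarrow> bool" where
  "IIC_comparability H \<longleftrightarrow> (\<exists>(C :: nat set) le. finite C \<and> partial_order_on_set C le
     \<and> IIC C le \<and> graph_iso H (comparability_graph C le))"

end

theory Submission
  imports Defs
begin


definition bp :: "'a graph \<Rightarrow> 'a set \<Rightarrow> 'a set \<Rightarrow> bool" where
"bp G A B \<longleftrightarrow> (\<forall>x y. adj G x y \<longrightarrow> adj G y x) \<and> A \<union> B = fst G \<and> A \<inter> B = {}
   \<and> independent G A \<and> independent G B"

lemma bp_swap: "bp G A B \<Longrightarrow> bp G B A" by (auto simp: bp_def)

lemma sides_sym: "bp G A B \<Longrightarrow> sides G P X Y \<Longrightarrow> sides G P Y X"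
  by (auto simp: sides_def bp_def)

lemma sides_AB:
  assumes bp: "bp G A B" and P: "P \<subseteq> fst G" and s: "sides G P X Y"
  shows "(X = P\<inter>A \<and> Y = P\<inter>B) \<or> (X = P\<inter>B \<and> Y = P\<inter>A)"
proof -
  from s obtain x y where x: "x\<in>X" and y: "y\<in>Y" unfolding sides_def by blast
  have XY: "X \<union> Y = P" "X\<inter>Y = {}" and cr: "\<forall>x\<in>X. \<forall>y\<in>Y. adj G x y"
    using s by (auto simp: sides_def)
  have V: "A \<union> B = fst G" "A\<inter>B={}" and iA: "independent G A" and iB: "independent G B"
    using bp by (auto simp: bp_def)
  have inV: "\<And>z. z\<in>P \<Longrightarrow> z \<in> A \<or> z \<in> B" using P V by auto
  show ?thesis
  proof (cases "x \<in> A")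
    case True
    have YB: "Y \<subseteq> B" proof
      fix y' assume "y'\<in>Y"
      then have "adj G x y'" using cr x by auto
      then have "y' \<notin> A" using iA True unfolding independent_def by auto
      then show "y' \<in> B" using inV \<open>y'\<in>Y\<close> XY by auto
    qed
    hence "y \<in> B" using y by auto
    have "X \<subseteq> A" proof
      fix x' assume "x'\<in>X"
      then have "adj G x' y" using cr y by auto
      then have "x' \<notin> B" using iB \<open>y\<in>B\<close> unfolding independent_def by auto
      then show "x' \<in> A" using inV \<open>x'\<in>X\<close> XY by auto
    qed
    then have "X = P\<inter>A" "Y = P\<inter>B" using YB XY V by auto
    thus ?thesis by auto
  next
    case False
    then have xB: "x \<in> B" using inV x XY by auto
    have YA: "Y \<subseteq> A" proof
      fix y' assume "y'\<in>Y"
      then have "adj G x y'" using cr x by auto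
      then have "y' \<notin> B" using iB xB unfolding independent_def by auto
      then show "y' \<in> A" using inV \<open>y'\<in>Y\<close> XY by auto
    qed
    hence "y \<in> A" using y by auto
    have "X \<subseteq> B" proof
      fix x' assume "x'\<in>X"
      then have "adj G x' y" using cr y by auto
      then have "x' \<notin> A" using iA \<open>y\<in>A\<close> unfolding independent_def by auto
      then show "x' \<in> B" using inV \<open>x'\<in>X\<close> XY by auto
    qed
    then have "X = P\<inter>B" "Y = P\<inter>A" using YA XY V by auto
    thus ?thesis by auto
  qed
qed

lemma cb_sides:
  assumes bp: "bp G A B" and cb: "complete_bipartite_set G P"
  shows "sides G P (P\<inter>A) (P\<inter>B)"
proof -
  from cb obtain X Y where s: "sides G P X Y" and P: "P \<subseteq> fst G"
    unfolding complete_bipartite_set_def by blast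
  from sides_AB[OF bp P s] show ?thesis
    using s sides_sym[OF bp s] by auto
qed

lemma closedB:
  assumes bp: "bp G A B" and bc: "biclique G P" and y: "y \<in> B"
    and ad: "\<forall>x\<in>P\<inter>A. adj G x y"
  shows "y \<in> P"
proof (rule ccontr)
  assume yP: "y \<notin> P"
  have cb: "complete_bipartite_set G P" and mx: "\<forall>Q. P\<subset>Q \<longrightarrow> \<not> complete_bipartite_set G Q"
    using bc by (auto simp: biclique_def)
  have s: "sides G P (P\<inter>A) (P\<inter>B)" by (rule cb_sides[OF bp cb])
  have PV: "P \<subseteq> fst G" using cb by (auto simp: complete_bipartite_set_def)
  have V: "A \<union> B = fst G" "A\<inter>B={}" and iA: "independent G A" and iB: "independent G B"
    using bp by (auto simp: bp_def)
  have "sides G (insert y P) (P\<inter>A) (insert y (P\<inter>B))"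
    unfolding sides_def
  proof (intro conjI)
    show "P \<inter> A \<noteq> {}" using s by (auto simp: sides_def)
    show "insert y (P \<inter> B) \<noteq> {}" by auto
    show "P \<inter> A \<inter> insert y (P \<inter> B) = {}" using y V by auto
    show "P \<inter> A \<union> insert y (P \<inter> B) = insert y P" using PV V by auto
    show "independent G (P \<inter> A)" using iA by (auto simp: independent_def)
    show "independent G (insert y (P \<inter> B))" using iB y by (auto simp: independent_def)
    show "\<forall>x\<in>P \<inter> A. \<forall>z\<in>insert y (P \<inter> B). adj G x z" using s ad by (auto simp: sides_def)
  qed
  moreover have "insert y P \<subseteq> fst G" using PV y V by auto
  ultimately have "complete_bipartite_set G (insert y P)"
    unfolding complete_bipartite_set_def by blast
  moreover have "P \<subset> insert y P" using yP by auto
  ultimately show False using mx by blast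
qed

lemma closedA:
  assumes bp: "bp G A B" and bc: "biclique G P" and x: "x \<in> A"
    and ad: "\<forall>y\<in>P\<inter>B. adj G x y"
  shows "x \<in> P"
proof -
  have "\<forall>y\<in>P\<inter>B. adj G y x" using ad bp by (auto simp: bp_def)
  thus ?thesis using closedB[OF bp_swap[OF bp] bc x] by blast
qed

lemma bic_sides: "bp G A B \<Longrightarrow> biclique G P \<Longrightarrow> sides G P (P\<inter>A) (P\<inter>B)"
  by (auto simp: biclique_def intro: cb_sides)

lemma bic_V: "biclique G P \<Longrightarrow> P \<subseteq> fst G"
  by (auto simp: biclique_def complete_bipartite_set_def)

lemma monoAB:
  assumes bp: "bp G A B" and P: "biclique G P" and Q: "biclique G Q" and sub: "P\<inter>A \<subseteq> Q\<inter>A"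
  shows "Q\<inter>B \<subseteq> P\<inter>B"
proof
  fix y assume y: "y \<in> Q\<inter>B"
  have "\<forall>x\<in>Q\<inter>A. adj G x y" using bic_sides[OF bp Q] y by (auto simp: sides_def)
  hence "\<forall>x\<in>P\<inter>A. adj G x y" using sub by blast
  hence "y \<in> P" using closedB[OF bp P] y by blast
  thus "y \<in> P\<inter>B" using y by blast
qed

lemma eqA:
  assumes bp: "bp G A B" and P: "biclique G P" and Q: "biclique G Q" and e: "P\<inter>A = Q\<inter>A"
  shows "P = Q"
proof -
  have "P\<inter>B = Q\<inter>B" using monoAB[OF bp P Q] monoAB[OF bp Q P] e by auto
  moreover have "P \<subseteq> A \<union> B" "Q \<subseteq> A \<union> B" using bic_V[OF P] bic_V[OF Q] bp by (auto simp: bp_def)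
  ultimately show ?thesis using e by blast
qed

lemma sides_ne: "sides G P X Y \<Longrightarrow> X \<noteq> {} \<and> Y \<noteq> {}" by (auto simp: sides_def)

lemma mi_char:
  assumes bp: "bp G A B" and P: "biclique G P" and Q: "biclique G Q"
  shows "mutually_included G P Q \<longleftrightarrow> (P\<inter>A \<subset> Q\<inter>A \<or> Q\<inter>A \<subset> P\<inter>A)"
proof
  have V: "A\<inter>B={}" using bp by (auto simp: bp_def)
  assume "mutually_included G P Q"
  then obtain XP YP XQ YQ where sP: "sides G P XP YP" and sQ: "sides G Q XQ YQ"
    and s1: "XQ \<subset> XP" and s2: "YP \<subset> YQ" unfolding mutually_included_def by blast
  note cP = sides_AB[OF bp bic_V[OF P] sP] and cQ = sides_AB[OF bp bic_V[OF Q] sQ]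
  have nQ: "XQ \<noteq> {}" using sides_ne[OF sQ] by blast
  show "P\<inter>A \<subset> Q\<inter>A \<or> Q\<inter>A \<subset> P\<inter>A"
    using cP cQ s1 s2 nQ V by blast
next
  assume h: "P\<inter>A \<subset> Q\<inter>A \<or> Q\<inter>A \<subset> P\<inter>A"
  show "mutually_included G P Q"
  proof (cases "Q\<inter>A \<subset> P\<inter>A")
    case True
    have "P\<inter>B \<subseteq> Q\<inter>B" using monoAB[OF bp Q P] True by auto
    moreover have "P\<inter>B \<noteq> Q\<inter>B"
      using eqA[OF bp_swap[OF bp] P Q] True by auto
    ultimately show ?thesis unfolding mutually_included_def
      using bic_sides[OF bp P] bic_sides[OF bp Q] True by blast
  next
    case False
    hence T: "P\<inter>A \<subset> Q\<inter>A" using h by blast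
    have "Q\<inter>B \<subseteq> P\<inter>B" using monoAB[OF bp P Q] T by auto
    moreover have "P\<inter>B \<noteq> Q\<inter>B"
      using eqA[OF bp_swap[OF bp] P Q] T by auto
    ultimately show ?thesis unfolding mutually_included_def
      using sides_sym[OF bp bic_sides[OF bp P]] sides_sym[OF bp bic_sides[OF bp Q]] T by blast
  qed
qed

lemma KBm_eq:
  assumes bp: "bp G A B"
  shows "KBm G = comparability_graph {P. biclique G P} (\<lambda>P Q. P\<inter>A \<subseteq> Q\<inter>A)"
proof -
  have "\<And>P Q. biclique G P \<Longrightarrow> biclique G Q \<Longrightarrow> P \<noteq> Q \<Longrightarrow>
     mutually_included G P Q \<longleftrightarrow> (P\<inter>A \<subseteq> Q\<inter>A \<or> Q\<inter>A \<subseteq> P\<inter>A)"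
  proof -
    fix P Q assume P: "biclique G P" and Q: "biclique G Q" and ne: "P \<noteq> Q"
    have "P\<inter>A \<noteq> Q\<inter>A" using eqA[OF bp P Q] ne by blast
    thus "mutually_included G P Q \<longleftrightarrow> (P\<inter>A \<subseteq> Q\<inter>A \<or> Q\<inter>A \<subseteq> P\<inter>A)"
      using mi_char[OF bp P Q] by blast
  qed
  thus ?thesis unfolding KBm_def comparability_graph_def by auto
qed



lemma indep_mono: "independent G A \<Longrightarrow> S \<subseteq> A \<Longrightarrow> independent G S"
  unfolding independent_def by blast

lemma biclique_intro:
  assumes bp: "bp G A B" and SA: "S \<subseteq> A" and TB: "T \<subseteq> B" and Sn: "S \<noteq> {}" and Tn: "T \<noteq> {}"
    and cr: "\<forall>x\<in>S. \<forall>y\<in>T. adj G x y"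
    and clB: "\<forall>y\<in>B. (\<forall>x\<in>S. adj G x y) \<longrightarrow> y \<in> T"
    and clA: "\<forall>x\<in>A. (\<forall>y\<in>T. adj G x y) \<longrightarrow> x \<in> S"
  shows "biclique G (S \<union> T)"
proof -
  have V: "A \<union> B = fst G" "A\<inter>B={}" and iA: "independent G A" and iB: "independent G B"
    using bp by (auto simp: bp_def)
  have s: "sides G (S\<union>T) S T" unfolding sides_def using Sn Tn SA TB V cr
      indep_mono[OF iA SA] indep_mono[OF iB TB] by blast
  have cb: "complete_bipartite_set G (S\<union>T)" unfolding complete_bipartite_set_def
    using s SA TB V by blast
  have "\<not> complete_bipartite_set G Q" if "S \<union> T \<subset> Q" for Q
  proof
    assume cQ: "complete_bipartite_set G Q"
    have sQ: "sides G Q (Q\<inter>A) (Q\<inter>B)" by (rule cb_sides[OF bp cQ])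
    have QV: "Q \<subseteq> A \<union> B" using cQ V by (auto simp: complete_bipartite_set_def)
    have "Q\<inter>B \<subseteq> T"
    proof
      fix y assume y: "y \<in> Q\<inter>B"
      have "\<forall>x\<in>Q\<inter>A. adj G x y" using sQ y by (auto simp: sides_def)
      moreover have "S \<subseteq> Q\<inter>A" using that SA by auto
      ultimately show "y \<in> T" using clB y by blast
    qed
    moreover have "Q\<inter>A \<subseteq> S"
    proof
      fix x assume x: "x \<in> Q\<inter>A"
      have "\<forall>y\<in>Q\<inter>B. adj G x y" using sQ x by (auto simp: sides_def)
      moreover have "T \<subseteq> Q\<inter>B" using that TB by auto
      ultimately show "x \<in> S" using clA x by blast
    qed
    ultimately have "Q \<subseteq> S \<union> T" using QV by blast
    thus False using that by blast
  qed
  thus ?thesis using cb by (auto simp: biclique_def)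
qed

lemma meet:
  assumes bp: "bp G A B" and u: "biclique G u" and v: "biclique G v" and P: "biclique G P"
    and sub: "P\<inter>A \<subseteq> u\<inter>A \<inter> (v\<inter>A)"
  shows "\<exists>w. biclique G w \<and> w\<inter>A = u\<inter>A \<inter> (v\<inter>A)"
proof -
  define S where "S = u\<inter>A \<inter> (v\<inter>A)"
  define T where "T = {y\<in>B. \<forall>x\<in>S. adj G x y}"
  have V: "A \<union> B = fst G" "A\<inter>B={}" using bp by (auto simp: bp_def)
  have Sn: "S \<noteq> {}" using sides_ne[OF bic_sides[OF bp P]] sub S_def by blast
  have su: "\<forall>x\<in>u\<inter>A. \<forall>y\<in>u\<inter>B. adj G x y" using bic_sides[OF bp u] by (auto simp: sides_def)
  have sv: "\<forall>x\<in>v\<inter>A. \<forall>y\<in>v\<inter>B. adj G x y" using bic_sides[OF bp v] by (auto simp: sides_def)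
  have uT: "u\<inter>B \<subseteq> T" using su by (auto simp: T_def S_def)
  have vT: "v\<inter>B \<subseteq> T" using sv by (auto simp: T_def S_def)
  have Tn: "T \<noteq> {}" using uT sides_ne[OF bic_sides[OF bp u]] by blast
  have clA: "\<forall>x\<in>A. (\<forall>y\<in>T. adj G x y) \<longrightarrow> x \<in> S"
  proof (intro ballI impI)
    fix x assume x: "x \<in> A" and a: "\<forall>y\<in>T. adj G x y"
    have "x \<in> u" using closedA[OF bp u x] a uT by blast
    moreover have "x \<in> v" using closedA[OF bp v x] a vT by blast
    ultimately show "x \<in> S" using x S_def by blast
  qed
  have "biclique G (S \<union> T)"
    by (rule biclique_intro[OF bp _ _ Sn Tn _ _ clA]) (auto simp: S_def T_def)
  moreover have "(S \<union> T) \<inter> A = S" using V by (auto simp: S_def T_def)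
  ultimately show ?thesis using S_def by blast
qed

lemma plusB:
  assumes bp: "bp G A B" and u: "biclique G u" and P: "biclique G P"
  shows "u\<inter>A \<subseteq> P\<inter>A \<longleftrightarrow> P\<inter>B \<subseteq> u\<inter>B"
  using monoAB[OF bp u P] monoAB[OF bp_swap[OF bp] P u] by blast

lemma po_A: "bp G A B \<Longrightarrow> partial_order_on_set {P. biclique G P} (\<lambda>P Q. P\<inter>A \<subseteq> Q\<inter>A)"
  unfolding partial_order_on_set_def using eqA[of G A B] by blast

lemma Iminus_A: "Iminus {P. biclique G P} (\<lambda>P Q. P\<inter>A \<subseteq> Q\<inter>A) u = {P. biclique G P \<and> P\<inter>A \<subseteq> u\<inter>A}"
  unfolding Iminus_def by simp

lemma Iplus_A:
  assumes bp: "bp G A B" and u: "biclique G u"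
  shows "Iplus {P. biclique G P} (\<lambda>P Q. P\<inter>A \<subseteq> Q\<inter>A) u = {P. biclique G P \<and> P\<inter>B \<subseteq> u\<inter>B}"
  unfolding Iplus_def using plusB[OF bp u] by blast

lemma IIC_A:
  assumes bp: "bp G A B"
  shows "IIC {P. biclique G P} (\<lambda>P Q. P\<inter>A \<subseteq> Q\<inter>A)"
  unfolding IIC_def
proof (intro ballI conjI impI)
  let ?C = "{P. biclique G P}" and ?le = "\<lambda>P Q. P\<inter>A \<subseteq> Q\<inter>A"
  fix u v assume u': "u \<in> ?C" and v': "v \<in> ?C"
  hence u: "biclique G u" and v: "biclique G v" by auto
  {
    assume "Iminus ?C ?le u \<inter> Iminus ?C ?le v \<noteq> {}"
    then obtain P where P: "biclique G P" "P\<inter>A \<subseteq> u\<inter>A \<inter> (v\<inter>A)"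
      unfolding Iminus_A by blast
    obtain w where w: "biclique G w" "w\<inter>A = u\<inter>A \<inter> (v\<inter>A)"
      using meet[OF bp u v P(1) P(2)] by blast
    have "Iminus ?C ?le w = Iminus ?C ?le u \<inter> Iminus ?C ?le v"
      unfolding Iminus_A w(2) by blast
    thus "\<exists>w\<in>?C. Iminus ?C ?le w = Iminus ?C ?le u \<inter> Iminus ?C ?le v"
      using w(1) by blast
  }
  {
    assume "Iplus ?C ?le u \<inter> Iplus ?C ?le v \<noteq> {}"
    then obtain P where P: "biclique G P" "P\<inter>B \<subseteq> u\<inter>B \<inter> (v\<inter>B)"
      unfolding Iplus_A[OF bp u] Iplus_A[OF bp v] by blast
    obtain w where w: "biclique G w" "w\<inter>B = u\<inter>B \<inter> (v\<inter>B)"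
      using meet[OF bp_swap[OF bp] u v P(1) P(2)] by blast
    have "Iplus ?C ?le w = Iplus ?C ?le u \<inter> Iplus ?C ?le v"
      unfolding Iplus_A[OF bp u] Iplus_A[OF bp v] Iplus_A[OF bp w(1)] w(2) by blast
    thus "\<exists>w\<in>?C. Iplus ?C ?le w = Iplus ?C ?le u \<inter> Iplus ?C ?le v"
      using w(1) by blast
  }
qed



lemma iso_trans:
  assumes "graph_iso G1 G2" "graph_iso G2 G3" shows "graph_iso G1 G3"
proof -
  obtain f where f: "bij_betw f (fst G1) (fst G2)" "\<forall>x\<in>fst G1. \<forall>y\<in>fst G1. adj G1 x y \<longleftrightarrow> adj G2 (f x) (f y)"
    using assms(1) unfolding graph_iso_def by blast
  obtain g where g: "bij_betw g (fst G2) (fst G3)" "\<forall>x\<in>fst G2. \<forall>y\<in>fst G2. adj G2 x y \<longleftrightarrow> adj G3 (g x) (g y)"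
    using assms(2) unfolding graph_iso_def by blast
  have "bij_betw (g \<circ> f) (fst G1) (fst G3)" using bij_betw_trans f g by blast
  moreover have "\<forall>x\<in>fst G1. \<forall>y\<in>fst G1. adj G1 x y \<longleftrightarrow> adj G3 ((g\<circ>f) x) ((g\<circ>f) y)"
  proof (intro ballI)
    fix x y assume x: "x \<in> fst G1" and y: "y \<in> fst G1"
    have "f x \<in> fst G2" "f y \<in> fst G2" using bij_betw_apply[OF f(1)] x y by blast+
    hence "adj G2 (f x) (f y) \<longleftrightarrow> adj G3 (g (f x)) (g (f y))" using g(2) by blast
    moreover have "adj G1 x y \<longleftrightarrow> adj G2 (f x) (f y)" using f(2) x y by blast
    ultimately show "adj G1 x y \<longleftrightarrow> adj G3 ((g\<circ>f) x) ((g\<circ>f) y)" by simp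
  qed
  ultimately show ?thesis unfolding graph_iso_def by blast
qed

lemma iso_sym:
  assumes "graph_iso G1 G2" shows "graph_iso G2 G1"
proof -
  obtain f where f: "bij_betw f (fst G1) (fst G2)" "\<forall>x\<in>fst G1. \<forall>y\<in>fst G1. adj G1 x y \<longleftrightarrow> adj G2 (f x) (f y)"
    using assms(1) unfolding graph_iso_def by blast
  let ?g = "inv_into (fst G1) f"
  have b: "bij_betw ?g (fst G2) (fst G1)" using bij_betw_inv_into[OF f(1)] .
  have "\<forall>x\<in>fst G2. \<forall>y\<in>fst G2. adj G2 x y \<longleftrightarrow> adj G1 (?g x) (?g y)"
  proof (intro ballI)
    fix x y assume x: "x \<in> fst G2" and y: "y \<in> fst G2"
    have im: "f ` fst G1 = fst G2" using bij_betw_imp_surj_on[OF f(1)] .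
    have fx: "f (?g x) = x" using f_inv_into_f[of x f "fst G1"] x im by simp
    have fy: "f (?g y) = y" using f_inv_into_f[of y f "fst G1"] y im by simp
    have "?g x \<in> fst G1" "?g y \<in> fst G1" using bij_betw_apply[OF b x] bij_betw_apply[OF b y] by auto
    hence "adj G1 (?g x) (?g y) \<longleftrightarrow> adj G2 (f (?g x)) (f (?g y))" using f(2) by blast
    thus "adj G2 x y \<longleftrightarrow> adj G1 (?g x) (?g y)" unfolding fx fy by blast
  qed
  thus ?thesis using b unfolding graph_iso_def by blast
qed

lemma transfer_nat:
  fixes C :: "'b set"
  assumes fin: "finite C" and po: "partial_order_on_set C le" and iic: "IIC C le"
    and iso: "graph_iso H (comparability_graph C le)"
  shows "IIC_comparability H"
proof -
  obtain f :: "'b \<Rightarrow> nat" where inj: "inj_on f C"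
    using finite_imp_inj_to_nat_seg[OF fin] by blast
  define D where "D = f ` C"
  define g where "g = inv_into C f"
  define le' where "le' = (\<lambda>m n. le (g m) (g n))"
  have gf: "\<And>x. x \<in> C \<Longrightarrow> g (f x) = x" using inj by (simp add: g_def)
  have finD: "finite D" using fin D_def by simp
  have poD: "partial_order_on_set D le'"
  proof -
    have gD: "\<And>m. m \<in> D \<Longrightarrow> g m \<in> C \<and> f (g m) = m"
      unfolding D_def g_def by (auto intro: inv_into_into f_inv_into_f)
    have r: "\<forall>x\<in>C. le x x" and a: "\<forall>x\<in>C. \<forall>y\<in>C. le x y \<and> le y x \<longrightarrow> x = y"
      and t: "\<forall>x\<in>C. \<forall>y\<in>C. \<forall>z\<in>C. le x y \<and> le y z \<longrightarrow> le x z"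
      using po unfolding partial_order_on_set_def by blast+
    show ?thesis unfolding partial_order_on_set_def le'_def
    proof (intro conjI ballI impI)
      fix x assume "x \<in> D" thus "le (g x) (g x)" using gD r by blast
    next
      fix x y assume x: "x \<in> D" and y: "y \<in> D" and h: "le (g x) (g y) \<and> le (g y) (g x)"
      hence "g x = g y" using gD a by blast
      thus "x = y" using gD[OF x] gD[OF y] by metis
    next
      fix x y z assume "x \<in> D" "y \<in> D" "z \<in> D" "le (g x) (g y) \<and> le (g y) (g z)"
      thus "le (g x) (g z)" using gD t by blast
    qed
  qed
  have Im: "\<And>u. u \<in> C \<Longrightarrow> Iminus D le' (f u) = f ` Iminus C le u"
    unfolding Iminus_def le'_def D_def using gf by auto
  have Ip: "\<And>u. u \<in> C \<Longrightarrow> Iplus D le' (f u) = f ` Iplus C le u"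
    unfolding Iplus_def le'_def D_def using gf by auto
  have subm: "\<And>u. Iminus C le u \<subseteq> C" and subp: "\<And>u. Iplus C le u \<subseteq> C"
    unfolding Iminus_def Iplus_def by auto
  have iicm: "\<And>u v. u\<in>C \<Longrightarrow> v\<in>C \<Longrightarrow> Iminus C le u \<inter> Iminus C le v \<noteq> {} \<Longrightarrow>
      \<exists>w\<in>C. Iminus C le w = Iminus C le u \<inter> Iminus C le v"
    using iic unfolding IIC_def by simp
  have iicp: "\<And>u v. u\<in>C \<Longrightarrow> v\<in>C \<Longrightarrow> Iplus C le u \<inter> Iplus C le v \<noteq> {} \<Longrightarrow>
      \<exists>w\<in>C. Iplus C le w = Iplus C le u \<inter> Iplus C le v"
    using iic unfolding IIC_def by simp
  have iicD: "IIC D le'" unfolding IIC_def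
  proof (intro ballI conjI impI)
    fix m n assume m: "m \<in> D" and n: "n \<in> D"
    obtain u where u: "u \<in> C" "m = f u" using m unfolding D_def by blast
    obtain v where v: "v \<in> C" "n = f v" using n unfolding D_def by blast
    {
      assume "Iminus D le' m \<inter> Iminus D le' n \<noteq> {}"
      moreover have "Iminus D le' m \<inter> Iminus D le' n = f ` (Iminus C le u \<inter> Iminus C le v)"
        unfolding u(2) v(2) Im[OF u(1)] Im[OF v(1)] by (rule inj_on_image_Int[OF inj subm subm, symmetric])
      ultimately have "Iminus C le u \<inter> Iminus C le v \<noteq> {}" by auto
      then obtain w where w: "w \<in> C" "Iminus C le w = Iminus C le u \<inter> Iminus C le v"
        using iicm[OF u(1) v(1)] by blast
      have "Iminus D le' (f w) = Iminus D le' m \<inter> Iminus D le' n"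
        unfolding u(2) v(2) Im[OF u(1)] Im[OF v(1)] Im[OF w(1)] w(2) by (rule inj_on_image_Int[OF inj subm subm])
      thus "\<exists>w\<in>D. Iminus D le' w = Iminus D le' m \<inter> Iminus D le' n" using w(1) D_def by blast
    }
    {
      assume "Iplus D le' m \<inter> Iplus D le' n \<noteq> {}"
      moreover have "Iplus D le' m \<inter> Iplus D le' n = f ` (Iplus C le u \<inter> Iplus C le v)"
        unfolding u(2) v(2) Ip[OF u(1)] Ip[OF v(1)] by (rule inj_on_image_Int[OF inj subp subp, symmetric])
      ultimately have "Iplus C le u \<inter> Iplus C le v \<noteq> {}" by auto
      then obtain w where w: "w \<in> C" "Iplus C le w = Iplus C le u \<inter> Iplus C le v"
        using iicp[OF u(1) v(1)] by blast
      have "Iplus D le' (f w) = Iplus D le' m \<inter> Iplus D le' n"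
        unfolding u(2) v(2) Ip[OF u(1)] Ip[OF v(1)] Ip[OF w(1)] w(2) by (rule inj_on_image_Int[OF inj subp subp])
      thus "\<exists>w\<in>D. Iplus D le' w = Iplus D le' m \<inter> Iplus D le' n" using w(1) D_def by blast
    }
  qed
  have "graph_iso (comparability_graph C le) (comparability_graph D le')"
    unfolding graph_iso_def
  proof (intro exI[of _ f] conjI)
    show "bij_betw f (fst (comparability_graph C le)) (fst (comparability_graph D le'))"
      using inj by (simp add: comparability_graph_def D_def bij_betw_def)
    show "\<forall>x\<in>fst (comparability_graph C le). \<forall>y\<in>fst (comparability_graph C le).
        adj (comparability_graph C le) x y = adj (comparability_graph D le') (f x) (f y)"
    proof (intro ballI)
      fix x y assume x: "x \<in> fst (comparability_graph C le)" and y: "y \<in> fst (comparability_graph C le)"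
      hence xC: "x \<in> C" and yC: "y \<in> C" by (auto simp: comparability_graph_def)
      have "f x = f y \<longleftrightarrow> x = y" using inj xC yC unfolding inj_on_def by blast
      thus "adj (comparability_graph C le) x y = adj (comparability_graph D le') (f x) (f y)"
        using xC yC gf[OF xC] gf[OF yC] unfolding comparability_graph_def adj_def le'_def D_def by auto
    qed
  qed
  hence "graph_iso H (comparability_graph D le')" using iso_trans iso by blast
  thus ?thesis unfolding IIC_comparability_def
    by (intro exI[of _ D] exI[of _ le'] conjI finD poD iicD)
qed

lemma dir1:
  assumes fsg: "finite_simple_graph G" and bi: "bipartite G" and iso: "graph_iso H (KBm G)"
  shows "IIC_comparability H"
proof -
  obtain A B where "A \<union> B = fst G" "A \<inter> B = {}" "independent G A" "independent G B"
    using bi unfolding bipartite_def by blast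
  hence bp: "bp G A B" using fsg unfolding bp_def finite_simple_graph_def adj_def by blast
  have fin: "finite {P. biclique G P}"
  proof (rule finite_subset[of _ "Pow (fst G)"])
    show "{P. biclique G P} \<subseteq> Pow (fst G)" using bic_V by blast
    show "finite (Pow (fst G))" using fsg by (simp add: finite_simple_graph_def)
  qed
  show ?thesis using transfer_nat[OF fin po_A[OF bp] IIC_A[OF bp]] iso KBm_eq[OF bp] by simp
qed



definition ev :: "nat set \<Rightarrow> nat set" where "ev S = (\<lambda>a. 2*a) ` S"
definition od :: "nat set \<Rightarrow> nat set" where "od S = (\<lambda>a. 2*a+1) ` S"
definition cg :: "nat set \<Rightarrow> (nat \<Rightarrow> nat \<Rightarrow> bool) \<Rightarrow> nat graph" where
 "cg C le = (ev C \<union> od C, {(2*a, 2*b+1) | a b. a\<in>C \<and> b\<in>C \<and> le a b}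
                         \<union> {(2*b+1, 2*a) | a b. a\<in>C \<and> b\<in>C \<and> le a b})"

lemma ne1[simp]: "2*(a::nat) \<noteq> Suc (2*b)" by presburger
lemma ne2[simp]: "Suc (2*(b::nat)) \<noteq> 2*a" by presburger

lemma ev_od_disj: "ev X \<inter> od Y = {}" by (auto simp: ev_def od_def)

lemma adj_ab: "adj (cg C le) (2*a) (2*b+1) \<longleftrightarrow> a\<in>C \<and> b\<in>C \<and> le a b"
  unfolding adj_def cg_def by auto

lemma adj_ee: "\<not> adj (cg C le) (2*a) (2*b)"
  unfolding adj_def cg_def by auto

lemma adj_oo: "\<not> adj (cg C le) (2*a+1) (2*b+1)"
  unfolding adj_def cg_def by auto

lemma adj_sym_cg: "adj (cg C le) x y \<Longrightarrow> adj (cg C le) y x"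
  unfolding adj_def cg_def by auto

lemma fsg_cg: "finite C \<Longrightarrow> finite_simple_graph (cg C le)"
  unfolding finite_simple_graph_def
proof (intro conjI allI impI)
  assume "finite C"
  thus "finite (fst (cg C le))" by (simp add: cg_def ev_def od_def)
  show "snd (cg C le) \<subseteq> fst (cg C le) \<times> fst (cg C le)"
    unfolding cg_def ev_def od_def by auto
  fix x y
  show "(x, y) \<in> snd (cg C le) \<Longrightarrow> (y, x) \<in> snd (cg C le)"
    using adj_sym_cg[of C le x y] by (simp add: adj_def)
  show "(x, x) \<notin> snd (cg C le)" unfolding cg_def by auto
qed

lemma bp_cg: "bp (cg C le) (ev C) (od C)"
  unfolding bp_def
proof (intro conjI allI impI)
  show "\<And>x y. adj (cg C le) x y \<Longrightarrow> adj (cg C le) y x" by (rule adj_sym_cg)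
  show "ev C \<union> od C = fst (cg C le)" by (simp add: cg_def)
  show "ev C \<inter> od C = {}" by (rule ev_od_disj)
  show "independent (cg C le) (ev C)" unfolding independent_def ev_def using adj_ee by auto
  show "independent (cg C le) (od C)" unfolding independent_def od_def using adj_oo by auto
qed

definition Pc :: "nat set \<Rightarrow> (nat \<Rightarrow> nat \<Rightarrow> bool) \<Rightarrow> nat \<Rightarrow> nat set" where
  "Pc C le c = ev {a\<in>C. le a c} \<union> od {b\<in>C. le c b}"

lemma ev_inter: "X \<subseteq> C \<Longrightarrow> (ev X \<union> od Y) \<inter> ev C = ev X"
  using ev_od_disj[of C Y] by (auto simp: ev_def)

lemma ev_sub_iff: "ev X \<subseteq> ev Y \<longleftrightarrow> X \<subseteq> Y"
  unfolding ev_def by (rule inj_image_subset_iff) (auto simp: inj_def)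

lemma po_parts:
  assumes "partial_order_on_set C le"
  shows "\<And>x. x\<in>C \<Longrightarrow> le x x" "\<And>x y. x\<in>C \<Longrightarrow> y\<in>C \<Longrightarrow> le x y \<Longrightarrow> le y x \<Longrightarrow> x = y"
    "\<And>x y z. x\<in>C \<Longrightarrow> y\<in>C \<Longrightarrow> z\<in>C \<Longrightarrow> le x y \<Longrightarrow> le y z \<Longrightarrow> le x z"
  using assms unfolding partial_order_on_set_def by blast+

lemma Pc_A: "Pc C le c \<inter> ev C = ev {a\<in>C. le a c}"
  unfolding Pc_def by (rule ev_inter) auto

lemma Pc_le:
  assumes po: "partial_order_on_set C le" and c: "c \<in> C" and d: "d \<in> C"
  shows "Pc C le c \<inter> ev C \<subseteq> Pc C le d \<inter> ev C \<longleftrightarrow> le c d"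
  unfolding Pc_A ev_sub_iff
  using po_parts[OF po] c d by blast

lemma Pc_inj:
  assumes po: "partial_order_on_set C le"
  shows "inj_on (Pc C le) C"
proof (rule inj_onI)
  fix c d assume c: "c \<in> C" and d: "d \<in> C" and e: "Pc C le c = Pc C le d"
  have "le c d" using Pc_le[OF po c d] e by simp
  moreover have "le d c" using Pc_le[OF po d c] e by simp
  ultimately show "c = d" using po_parts(2)[OF po c d] by blast
qed

lemma Pc_bic:
  assumes po: "partial_order_on_set C le" and c: "c \<in> C"
  shows "biclique (cg C le) (Pc C le c)"
  unfolding Pc_def
proof (rule biclique_intro[OF bp_cg])
  note p = po_parts[OF po]
  show "ev {a \<in> C. le a c} \<subseteq> ev C" "od {b \<in> C. le c b} \<subseteq> od C"
    by (auto simp: ev_def od_def)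
  show "ev {a \<in> C. le a c} \<noteq> {}" "od {b \<in> C. le c b} \<noteq> {}"
    using c p(1)[OF c] unfolding ev_def od_def by blast+
  show "\<forall>x\<in>ev {a \<in> C. le a c}. \<forall>y\<in>od {b \<in> C. le c b}. adj (cg C le) x y"
  proof (intro ballI)
    fix x y assume x: "x \<in> ev {a \<in> C. le a c}" and y: "y \<in> od {b \<in> C. le c b}"
    obtain a where a: "a \<in> C" "le a c" "x = 2*a" using x unfolding ev_def by blast
    obtain b where b: "b \<in> C" "le c b" "y = 2*b+1" using y unfolding od_def by blast
    have "le a b" using p(3)[OF a(1) c b(1) a(2) b(2)] .
    thus "adj (cg C le) x y" using a b adj_ab by simp
  qed
  show "\<forall>y\<in>od C. (\<forall>x\<in>ev {a \<in> C. le a c}. adj (cg C le) x y) \<longrightarrow> y \<in> od {b \<in> C. le c b}"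
  proof (intro ballI impI)
    fix y assume y: "y \<in> od C" and h: "\<forall>x\<in>ev {a \<in> C. le a c}. adj (cg C le) x y"
    obtain b where b: "b \<in> C" "y = 2*b+1" using y unfolding od_def by blast
    have "2*c \<in> ev {a \<in> C. le a c}" using c p(1)[OF c] unfolding ev_def by blast
    hence "adj (cg C le) (2*c) (2*b+1)" using h b by blast
    hence "le c b" using adj_ab by blast
    thus "y \<in> od {b \<in> C. le c b}" using b unfolding od_def by blast
  qed
  show "\<forall>x\<in>ev C. (\<forall>y\<in>od {b \<in> C. le c b}. adj (cg C le) x y) \<longrightarrow> x \<in> ev {a \<in> C. le a c}"
  proof (intro ballI impI)
    fix x assume x: "x \<in> ev C" and h: "\<forall>y\<in>od {b \<in> C. le c b}. adj (cg C le) x y"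
    obtain a where a: "a \<in> C" "x = 2*a" using x unfolding ev_def by blast
    have "2*c+1 \<in> od {b \<in> C. le c b}" using c p(1)[OF c] unfolding od_def by blast
    hence "adj (cg C le) (2*a) (2*c+1)" using h a by blast
    hence "le a c" using adj_ab by blast
    thus "x \<in> ev {a \<in> C. le a c}" using a unfolding ev_def by blast
  qed
qed

lemma iic_fin:
  assumes iic: "IIC C le" and fin: "finite F" and ne: "F \<noteq> {}"
  shows "F \<subseteq> C \<Longrightarrow> L \<noteq> {} \<Longrightarrow> (\<forall>u\<in>F. L \<subseteq> Iminus C le u) \<Longrightarrow>
    \<exists>w\<in>C. Iminus C le w = (\<Inter>u\<in>F. Iminus C le u)"
  using fin ne
proof (induction F rule: finite_ne_induct)
  case (singleton x)
  thus ?case by auto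
next
  case (insert x F)
  obtain w' where w': "w' \<in> C" "Iminus C le w' = (\<Inter>u\<in>F. Iminus C le u)"
    using insert by auto
  have "L \<subseteq> Iminus C le x \<inter> Iminus C le w'" using insert.prems w'(2) by auto
  hence "Iminus C le x \<inter> Iminus C le w' \<noteq> {}" using insert.prems by blast
  moreover have "x \<in> C" using insert.prems by auto
  moreover have "\<And>u v. u\<in>C \<Longrightarrow> v\<in>C \<Longrightarrow> Iminus C le u \<inter> Iminus C le v \<noteq> {} \<Longrightarrow>
      \<exists>w\<in>C. Iminus C le w = Iminus C le u \<inter> Iminus C le v"
    using iic unfolding IIC_def by simp
  ultimately obtain w where "w \<in> C" "Iminus C le w = Iminus C le x \<inter> Iminus C le w'"
    using w'(1) by blast
  thus ?case using w'(2) by auto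
qed

lemma bic_Pc:
  assumes po: "partial_order_on_set C le" and iic: "IIC C le" and fin: "finite C"
    and P: "biclique (cg C le) P"
  shows "\<exists>w\<in>C. P = Pc C le w"
proof -
  note bp = bp_cg[of C le]
  note p = po_parts[OF po]
  define L where "L = {a\<in>C. 2*a \<in> P}"
  define U where "U = {b\<in>C. 2*b+1 \<in> P}"
  have PV: "P \<subseteq> ev C \<union> od C" using bic_V[OF P] by (simp add: cg_def)
  have PA: "P \<inter> ev C = ev L" unfolding ev_def L_def by blast
  have PB: "P \<inter> od C = od U" unfolding od_def U_def by blast
  have Peq: "P = ev L \<union> od U" using PV PA PB by blast
  have s: "sides (cg C le) P (ev L) (od U)" using bic_sides[OF bp P] unfolding PA PB .
  have Lne: "L \<noteq> {}" and Une: "U \<noteq> {}" using s unfolding sides_def ev_def od_def by auto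
  have LC: "L \<subseteq> C" and UC: "U \<subseteq> C" unfolding L_def U_def by auto
  have cross: "\<And>a b. a \<in> L \<Longrightarrow> b \<in> U \<Longrightarrow> le a b"
  proof -
    fix a b assume a: "a \<in> L" and b: "b \<in> U"
    have "2*a \<in> ev L" "2*b+1 \<in> od U" using a b unfolding ev_def od_def by auto
    hence "adj (cg C le) (2*a) (2*b+1)" using s unfolding sides_def by blast
    thus "le a b" using adj_ab by blast
  qed
  have clB: "\<And>b. b \<in> C \<Longrightarrow> (\<forall>a\<in>L. le a b) \<Longrightarrow> b \<in> U"
  proof -
    fix b assume b: "b \<in> C" and h: "\<forall>a\<in>L. le a b"
    have "2*b+1 \<in> od C" using b unfolding od_def by blast
    moreover have "\<forall>x\<in>P \<inter> ev C. adj (cg C le) x (2*b+1)"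
    proof
      fix x assume "x \<in> P \<inter> ev C"
      hence "x \<in> ev L" using PA by blast
      then obtain a where a: "a \<in> L" "x = 2*a" unfolding ev_def by blast
      have "a \<in> C" using a LC by blast
      thus "adj (cg C le) x (2*b+1)" using a h b adj_ab by simp
    qed
    ultimately have "2*b+1 \<in> P" using closedB[OF bp P] by blast
    thus "b \<in> U" using b unfolding U_def by blast
  qed
  have clA: "\<And>a. a \<in> C \<Longrightarrow> (\<forall>b\<in>U. le a b) \<Longrightarrow> a \<in> L"
  proof -
    fix a assume a: "a \<in> C" and h: "\<forall>b\<in>U. le a b"
    have "2*a \<in> ev C" using a unfolding ev_def by blast
    moreover have "\<forall>y\<in>P \<inter> od C. adj (cg C le) (2*a) y"
    proof
      fix y assume "y \<in> P \<inter> od C"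
      hence "y \<in> od U" using PB by blast
      then obtain b where b: "b \<in> U" "y = 2*b+1" unfolding od_def by blast
      have "b \<in> C" using b UC by blast
      thus "adj (cg C le) (2*a) y" using a h b adj_ab by simp
    qed
    ultimately have "2*a \<in> P" using closedA[OF bp P] by blast
    thus "a \<in> L" using a unfolding L_def by blast
  qed
  have Ufin: "finite U" using fin UC finite_subset by blast
  have "\<forall>u\<in>U. L \<subseteq> Iminus C le u" using cross LC unfolding Iminus_def by blast
  then obtain w where w: "w \<in> C" "Iminus C le w = (\<Inter>u\<in>U. Iminus C le u)"
    using iic_fin[OF iic Ufin Une UC Lne] by blast
  have IL: "Iminus C le w = L"
  proof
    show "Iminus C le w \<subseteq> L"
    proof
      fix x assume "x \<in> Iminus C le w"
      hence "x \<in> (\<Inter>u\<in>U. Iminus C le u)" using w(2) by simp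
      hence "x \<in> C" "\<forall>u\<in>U. le x u" unfolding Iminus_def using Une by auto
      thus "x \<in> L" using clA by blast
    qed
    have "L \<subseteq> (\<Inter>u\<in>U. Iminus C le u)" unfolding Iminus_def using cross LC by blast
    thus "L \<subseteq> Iminus C le w" using w(2) by simp
  qed
  have wL: "w \<in> L" using IL w(1) p(1)[OF w(1)] unfolding Iminus_def by blast
  have L2: "L = {a\<in>C. le a w}" using IL unfolding Iminus_def by blast
  have U2: "U = {b\<in>C. le w b}"
  proof
    show "U \<subseteq> {b\<in>C. le w b}" using cross wL UC by blast
    show "{b\<in>C. le w b} \<subseteq> U"
    proof
      fix b assume b: "b \<in> {b\<in>C. le w b}"
      have "\<forall>a\<in>L. le a b"
      proof
        fix a assume a: "a \<in> L"
        hence "a \<in> C" "le a w" using L2 by auto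
        thus "le a b" using p(3)[of a w b] w(1) b by blast
      qed
      thus "b \<in> U" using clB b by blast
    qed
  qed
  show ?thesis using Peq L2 U2 w(1) unfolding Pc_def by blast
qed

lemma core:
  assumes fin: "finite C" and po: "partial_order_on_set C le" and iic: "IIC C le"
  shows "graph_iso (comparability_graph C le) (KBm (cg C le))"
  unfolding KBm_eq[OF bp_cg] graph_iso_def
proof (intro exI[of _ "Pc C le"] conjI)
  have img: "Pc C le ` C = {P. biclique (cg C le) P}"
    using Pc_bic[OF po] bic_Pc[OF po iic fin] by blast
  show "bij_betw (Pc C le) (fst (comparability_graph C le))
     (fst (comparability_graph {P. biclique (cg C le) P} (\<lambda>P Q. P \<inter> ev C \<subseteq> Q \<inter> ev C)))"
    unfolding comparability_graph_def bij_betw_def using Pc_inj[OF po] img by simp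
  show "\<forall>x\<in>fst (comparability_graph C le). \<forall>y\<in>fst (comparability_graph C le).
     adj (comparability_graph C le) x y =
     adj (comparability_graph {P. biclique (cg C le) P} (\<lambda>P Q. P \<inter> ev C \<subseteq> Q \<inter> ev C)) (Pc C le x) (Pc C le y)"
  proof (intro ballI)
    fix x y assume "x \<in> fst (comparability_graph C le)" "y \<in> fst (comparability_graph C le)"
    hence x: "x \<in> C" and y: "y \<in> C" by (auto simp: comparability_graph_def)
    have e: "Pc C le x = Pc C le y \<longleftrightarrow> x = y" using Pc_inj[OF po] x y unfolding inj_on_def by blast
    have b: "biclique (cg C le) (Pc C le x)" "biclique (cg C le) (Pc C le y)"
      using Pc_bic[OF po] x y by auto
    show "adj (comparability_graph C le) x y =
     adj (comparability_graph {P. biclique (cg C le) P} (\<lambda>P Q. P \<inter> ev C \<subseteq> Q \<inter> ev C)) (Pc C le x) (Pc C le y)"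
      unfolding comparability_graph_def adj_def using x y e b Pc_le[OF po x y] Pc_le[OF po y x] by simp
  qed
qed

theorem theorem5:
  fixes H :: "'a graph"
  assumes "finite_simple_graph H"
  shows "(\<exists>G :: nat graph. finite_simple_graph G \<and> bipartite G \<and> graph_iso H (KBm G))
         \<longleftrightarrow> IIC_comparability H"
proof
  assume "\<exists>G :: nat graph. finite_simple_graph G \<and> bipartite G \<and> graph_iso H (KBm G)"
  thus "IIC_comparability H" using dir1 by blast
next
  assume "IIC_comparability H"
  then obtain C :: "nat set" and le where C: "finite C" "partial_order_on_set C le" "IIC C le"
    "graph_iso H (comparability_graph C le)" unfolding IIC_comparability_def by blast
  have "finite_simple_graph (cg C le)" using fsg_cg[OF C(1)] .
  moreover have "bipartite (cg C le)" using bp_cg[of C le] unfolding bipartite_def bp_def by blast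
  moreover have "graph_iso H (KBm (cg C le))" using iso_trans[OF C(4) core[OF C(1-3)]] .
  ultimately show "\<exists>G :: nat graph. finite_simple_graph G \<and> bipartite G \<and> graph_iso H (KBm G)" by blast
qed


end
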